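(* Let $S$ be a semilattice and $\omega$ a submultiplicative weight on $S$. The following are equivalent: (i) $\ell^1_\omega(S)$ is AMNM; (ii) for every $\varepsilon>0$ there exists $\delta>0$ such that whenever $\phi:S\to\{0,1\}$ satisfies $\sup_{e,f\in S}\frac{|\phi(ef)-\phi(e)\phi(f)|}{\omega(e)\omega(f)}\le\delta$, there exists a subset $F\subseteq S$ which is either empty or a filter such that $\sup_{e\in S}\frac{|\chi_F(e)-\phi(e)|}{\omega(e)}\le\varepsilon$, where $\chi_F$ is the indicator function of $F$.
   Context: A semilattice is a commutative semigroup in which every element is idempotent, ordered by $x\preceq y$ iff $xy=x$. A weight is a function $\omega:S\to(0,\infty)$, submultiplicative if $\omega(xy)\le\omega(x)\omega(y)$. $\ell^1_\omega(S)$ is the Banach space of $a:S\to\mathbb C$ with $\|a\|=\sum_s|a(s)|\omega(s)<\infty$, a Banach algebra under convolution ($\delta_x*\delta_y=\delta_{xy}$). A filter in $S$ is a non-empty subset $F$ closed under multiplication and upward closed (if $y\in F$ and $x\succeq y$ then $x\in F$). For a bounded linear map $T$ between Banach algebras, $\operatorname{def}(T)=\sup\{\|T(xy)-T(x)T(y)\|:\|x\|,\|y\|\le1\}$; $\operatorname{Mult}(A,\mathbb C)$ is the set of bounded multiplicative linear functionals on $A$ (including $0$). $A$ is AMNM if for every $\varepsilon>0$ there is $\delta>0$ such that every $\psi\in A^*$ with $\operatorname{def}(\psi)\le\delta$ satisfies $\operatorname{dist}_{A^*}(\psi,\operatorname{Mult}(A,\mathbb C))\le\varepsilon$. *)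

theory Defs
  imports "HOL-Analysis.Analysis"
begin

text \<open>A semilattice S is modelled as a type of class semilattice_inf; the
  semigroup product x y is inf x y, and the order x \<preceq> y (iff x y = x) is
  the class order x \<le> y.\<close>

definition sl_weight :: "('a::semilattice_inf \<Rightarrow> real) \<Rightarrow> bool" where
  "sl_weight \<omega> \<longleftrightarrow> (\<forall>s. 0 < \<omega> s) \<and> (\<forall>x y. \<omega> (inf x y) \<le> \<omega> x * \<omega> y)"

definition sl_filter :: "'a::semilattice_inf set \<Rightarrow> bool" where
  "sl_filter F \<longleftrightarrow> F \<noteq> {} \<and> (\<forall>x\<in>F. \<forall>y\<in>F. inf x y \<in> F) \<and>
     (\<forall>y\<in>F. \<forall>x. y \<le> x \<longrightarrow> x \<in> F)"

definition l1w :: "('a \<Rightarrow> real) \<Rightarrow> ('a \<Rightarrow> complex) set" where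
  "l1w \<omega> = {a. (\<lambda>s. norm (a s) * \<omega> s) summable_on UNIV}"

definition l1w_norm :: "('a \<Rightarrow> real) \<Rightarrow> ('a \<Rightarrow> complex) \<Rightarrow> real" where
  "l1w_norm \<omega> a = (\<Sum>\<^sub>\<infinity>s. norm (a s) * \<omega> s)"

definition sl_conv :: "('a::semilattice_inf \<Rightarrow> complex) \<Rightarrow> ('a \<Rightarrow> complex) \<Rightarrow> 'a \<Rightarrow> complex" where
  "sl_conv a b = (\<lambda>t. \<Sum>\<^sub>\<infinity>(s,u)\<in>{(s,u). inf s u = t}. a s * b u)"

definition l1w_dual :: "('a \<Rightarrow> real) \<Rightarrow> (('a \<Rightarrow> complex) \<Rightarrow> complex) set" where
  "l1w_dual \<omega> = {\<psi>.
     (\<forall>a\<in>l1w \<omega>. \<forall>b\<in>l1w \<omega>. \<psi> (\<lambda>s. a s + b s) = \<psi> a + \<psi> b) \<and>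
     (\<forall>c. \<forall>a\<in>l1w \<omega>. \<psi> (\<lambda>s. c * a s) = c * \<psi> a) \<and>
     (\<exists>C. \<forall>a\<in>l1w \<omega>. norm (\<psi> a) \<le> C * l1w_norm \<omega> a)}"

definition l1w_mult :: "('a::semilattice_inf \<Rightarrow> real) \<Rightarrow> (('a \<Rightarrow> complex) \<Rightarrow> complex) set" where
  "l1w_mult \<omega> = {\<psi> \<in> l1w_dual \<omega>.
     \<forall>a\<in>l1w \<omega>. \<forall>b\<in>l1w \<omega>. \<psi> (sl_conv a b) = \<psi> a * \<psi> b}"

definition l1w_def :: "('a::semilattice_inf \<Rightarrow> real) \<Rightarrow> (('a \<Rightarrow> complex) \<Rightarrow> complex) \<Rightarrow> real" where
  "l1w_def \<omega> \<psi> = Sup {norm (\<psi> (sl_conv a b) - \<psi> a * \<psi> b) | a b.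
      a \<in> l1w \<omega> \<and> b \<in> l1w \<omega> \<and> l1w_norm \<omega> a \<le> 1 \<and> l1w_norm \<omega> b \<le> 1}"

definition l1w_dual_dist :: "('a \<Rightarrow> real) \<Rightarrow> (('a \<Rightarrow> complex) \<Rightarrow> complex) \<Rightarrow> (('a \<Rightarrow> complex) \<Rightarrow> complex) \<Rightarrow> real" where
  "l1w_dual_dist \<omega> \<psi> \<mu> = Sup {norm (\<psi> a - \<mu> a) | a. a \<in> l1w \<omega> \<and> l1w_norm \<omega> a \<le> 1}"

definition l1w_dist_mult :: "('a::semilattice_inf \<Rightarrow> real) \<Rightarrow> (('a \<Rightarrow> complex) \<Rightarrow> complex) \<Rightarrow> real" where
  "l1w_dist_mult \<omega> \<psi> = Inf (l1w_dual_dist \<omega> \<psi> ` l1w_mult \<omega>)"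

definition l1w_AMNM :: "('a::semilattice_inf \<Rightarrow> real) \<Rightarrow> bool" where
  "l1w_AMNM \<omega> \<longleftrightarrow> (\<forall>\<epsilon>>0. \<exists>\<delta>>0. \<forall>\<psi>\<in>l1w_dual \<omega>.
      l1w_def \<omega> \<psi> \<le> \<delta> \<longrightarrow> l1w_dist_mult \<omega> \<psi> \<le> \<epsilon>)"

end

theory Submission
  imports Defs
begin



lemma weight_ge1:
  assumes "sl_weight \<omega>" shows "1 \<le> \<omega> s"
proof -
  have p: "0 < \<omega> s" using assms unfolding sl_weight_def by auto
  have "\<omega> s \<le> \<omega> s * \<omega> s" using assms unfolding sl_weight_def by (metis inf.idem)
  then show ?thesis using p by (metis mult_le_cancel_left1 mult.commute)
qed

definition dlt :: "'a \<Rightarrow> 'a \<Rightarrow> complex" where "dlt e = (\<lambda>x. if x = e then 1 else 0)"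

lemma infsum_single_point:
  "(\<Sum>\<^sub>\<infinity>x\<in>A. (if x = e then c else 0 :: 'b::{comm_monoid_add,t2_space})) = (if e \<in> A then c else 0)"
proof -
  have "(\<Sum>\<^sub>\<infinity>x\<in>A. (if x = e then c else 0 :: 'b)) = (\<Sum>\<^sub>\<infinity>x\<in>A\<inter>{e}. (if x = e then c else 0 :: 'b))"
    by (rule infsum_cong_neutral) auto
  also have "\<dots> = (if e \<in> A then c else 0)"
    by (cases "e \<in> A") auto
  finally show ?thesis .
qed



lemma infsum_diff':
  fixes f g :: "'a \<Rightarrow> 'b::{topological_ab_group_add,t2_space}"
  assumes "f summable_on A" "g summable_on A"
  shows "(\<Sum>\<^sub>\<infinity>x\<in>A. f x - g x) = infsum f A - infsum g A"
proof -
  have "(\<Sum>\<^sub>\<infinity>x\<in>A. f x + (- g x)) = infsum f A + (\<Sum>\<^sub>\<infinity>x\<in>A. - g x)"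
    by (rule infsum_add) (use assms summable_on_uminus in auto)
  then show ?thesis by (simp add: infsum_uminus)
qed

lemma prod_abs_summable:
  fixes f :: "'a \<Rightarrow> 'c::{real_normed_div_algebra,banach,second_countable_topology}" and g :: "'b \<Rightarrow> 'c"
  assumes f: "(\<lambda>s. norm (f s)) summable_on UNIV" and g: "(\<lambda>u. norm (g u)) summable_on UNIV"
  shows "(\<lambda>(s,u). norm (f s * g u)) summable_on UNIV"
proof -
  have "(\<lambda>p. norm ((\<lambda>(s,u). f s * g u) p)) summable_on Sigma UNIV (\<lambda>_. UNIV)"
  proof (rule Infinite_Sum.abs_summable_on_Sigma_iff[where f="\<lambda>(s,u). f s * g u" and A=UNIV and B="\<lambda>_. UNIV", THEN iffD2], intro conjI ballI)
    fix x
    show "(\<lambda>y. norm (case (x, y) of (s, u) \<Rightarrow> f s * g u)) summable_on UNIV"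
      using summable_on_cmult_right[OF g, of "norm (f x)"] by (simp add: norm_mult)
  next
    have "(\<lambda>x. norm (f x) * (\<Sum>\<^sub>\<infinity>y. norm (g y))) summable_on UNIV"
      by (rule summable_on_cmult_left[OF f])
    moreover have "(\<Sum>\<^sub>\<infinity>y. norm (case (x, y) of (s, u) \<Rightarrow> f s * g u)) = norm (f x) * (\<Sum>\<^sub>\<infinity>y. norm (g y))" for x
      by (simp add: norm_mult infsum_cmult_right')
    ultimately show "(\<lambda>x. norm (\<Sum>\<^sub>\<infinity>y. norm (case (x, y) of (s, u) \<Rightarrow> f s * g u))) summable_on UNIV"
      by (simp add: infsum_nonneg)
  qed
  then show ?thesis by (simp add: case_prod_unfold)
qed

lemma prod_infsum:
  fixes f :: "'a \<Rightarrow> 'c::{real_normed_div_algebra,banach,second_countable_topology}" and g :: "'b \<Rightarrow> 'c"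
  assumes f: "(\<lambda>s. norm (f s)) summable_on UNIV" and g: "(\<lambda>u. norm (g u)) summable_on UNIV"
  shows "(\<Sum>\<^sub>\<infinity>(s,u). f s * g u) = (\<Sum>\<^sub>\<infinity>s. f s) * (\<Sum>\<^sub>\<infinity>u. g u)"
proof -
  have fs: "f summable_on UNIV" using f abs_summable_summable by blast
  have gs: "g summable_on UNIV" using g abs_summable_summable by blast
  have "(\<lambda>(s,u). f s * g u) summable_on Sigma UNIV (\<lambda>_. UNIV)"
    using abs_summable_summable[of "\<lambda>(s,u). f s * g u"] prod_abs_summable[OF f g] by (simp add: case_prod_unfold)
  then have "(\<Sum>\<^sub>\<infinity>s. \<Sum>\<^sub>\<infinity>u. f s * g u) = (\<Sum>\<^sub>\<infinity>(s,u)\<in>Sigma UNIV (\<lambda>_. UNIV). f s * g u)"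
    by (rule infsum_Sigma'_banach)
  moreover have "(\<Sum>\<^sub>\<infinity>s. \<Sum>\<^sub>\<infinity>u. f s * g u) = (\<Sum>\<^sub>\<infinity>s. f s * (\<Sum>\<^sub>\<infinity>u. g u))"
    using infsum_cmult_right[OF gs] by simp
  moreover have "\<dots> = (\<Sum>\<^sub>\<infinity>s. f s) * (\<Sum>\<^sub>\<infinity>u. g u)"
    using infsum_cmult_left[OF fs] by simp
  ultimately show ?thesis by simp
qed

lemma regroup:
  fixes h :: "'a::semilattice_inf \<times> 'a \<Rightarrow> 'b::banach"
  assumes "h summable_on UNIV"
  shows "(\<lambda>t. \<Sum>\<^sub>\<infinity>p\<in>{(s,u). inf s u = t}. h p) summable_on UNIV"
    and "(\<Sum>\<^sub>\<infinity>t. \<Sum>\<^sub>\<infinity>p\<in>{(s,u). inf s u = t}. h p) = (\<Sum>\<^sub>\<infinity>p. h p)"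
proof -
  define j where "j = (\<lambda>p::'a\<times>'a. (inf (fst p) (snd p), p))"
  have bij: "bij_betw j UNIV (Sigma UNIV (\<lambda>t. {(s,u). inf s u = t}))"
    unfolding j_def by (rule bij_betwI[where g=snd]) auto
  have hj: "(\<lambda>p. (\<lambda>(t,q). h q) (j p)) = h" unfolding j_def by auto
  have S: "(\<lambda>(t,q). h q) summable_on Sigma UNIV (\<lambda>t. {(s,u). inf s u = t})"
    using summable_on_reindex_bij_betw[OF bij, of "\<lambda>(t,q). h q"] assms hj by simp
  show "(\<lambda>t. \<Sum>\<^sub>\<infinity>p\<in>{(s,u). inf s u = t}. h p) summable_on UNIV"
    using summable_on_Sigma_banach[of "\<lambda>t q. h q" UNIV "\<lambda>t. {(s,u). inf s u = t}"] S by simp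
  have "(\<Sum>\<^sub>\<infinity>t. \<Sum>\<^sub>\<infinity>p\<in>{(s,u). inf s u = t}. h p) = (\<Sum>\<^sub>\<infinity>(t,q)\<in>Sigma UNIV (\<lambda>t. {(s,u). inf s u = t}). h q)"
    using infsum_Sigma'_banach[of "\<lambda>t q. h q" UNIV "\<lambda>t. {(s,u). inf s u = t}"] S by simp
  also have "\<dots> = (\<Sum>\<^sub>\<infinity>p. h p)"
    using infsum_reindex_bij_betw[OF bij, of "\<lambda>(t,q). h q"] hj by simp
  finally show "(\<Sum>\<^sub>\<infinity>t. \<Sum>\<^sub>\<infinity>p\<in>{(s,u). inf s u = t}. h p) = (\<Sum>\<^sub>\<infinity>p. h p)" .
qed


lemma weight_pos: "sl_weight \<omega> \<Longrightarrow> 0 < \<omega> s" unfolding sl_weight_def by auto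
lemma weight_inf: "sl_weight \<omega> \<Longrightarrow> \<omega> (inf s u) \<le> \<omega> s * \<omega> u" unfolding sl_weight_def by auto

lemma l1wD: "a \<in> l1w \<omega> \<Longrightarrow> (\<lambda>s. norm (a s) * \<omega> s) summable_on UNIV"
  unfolding l1w_def by auto

lemma l1w_norm_nonneg: "sl_weight \<omega> \<Longrightarrow> 0 \<le> l1w_norm \<omega> a"
  unfolding l1w_norm_def by (rule infsum_nonneg) (use weight_pos[of \<omega>] in \<open>simp add: less_imp_le\<close>)

lemma l1w_abs: 
  assumes w: "sl_weight \<omega>" and a: "a \<in> l1w \<omega>"
  shows "(\<lambda>s. norm (a s)) summable_on UNIV"
proof (rule summable_on_comparison_test[OF l1wD[OF a]])
  fix s show "norm (a s) \<le> norm (a s) * \<omega> s"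
    using weight_ge1[OF w, of s] by (simp add: mult_le_cancel_left1)
qed auto

lemma l1w_summable:
  assumes w: "sl_weight \<omega>" and a: "a \<in> l1w \<omega>"
  shows "a summable_on UNIV"
  using abs_summable_summable l1w_abs[OF w a] by blast

lemma pair_N_summable:
  assumes w: "sl_weight \<omega>" and a: "a \<in> l1w \<omega>" and b: "b \<in> l1w \<omega>"
  shows "(\<lambda>(s,u). (norm (a s) * \<omega> s) * (norm (b u) * \<omega> u)) summable_on UNIV"
    and "(\<Sum>\<^sub>\<infinity>(s,u). (norm (a s) * \<omega> s) * (norm (b u) * \<omega> u)) = l1w_norm \<omega> a * l1w_norm \<omega> b"
proof -
  have na: "(\<lambda>s. norm (norm (a s) * \<omega> s)) summable_on UNIV"
    using l1wD[OF a] weight_pos[OF w] by (simp add: abs_mult less_imp_le)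
  have nb: "(\<lambda>s. norm (norm (b s) * \<omega> s)) summable_on UNIV"
    using l1wD[OF b] weight_pos[OF w] by (simp add: abs_mult less_imp_le)
  have "(\<lambda>(s,u). norm ((norm (a s) * \<omega> s) * (norm (b u) * \<omega> u))) summable_on UNIV"
    by (rule prod_abs_summable[OF na nb])
  then show "(\<lambda>(s,u). (norm (a s) * \<omega> s) * (norm (b u) * \<omega> u)) summable_on UNIV"
    using weight_pos[OF w] by (simp add: abs_mult less_imp_le case_prod_unfold)
  show "(\<Sum>\<^sub>\<infinity>(s,u). (norm (a s) * \<omega> s) * (norm (b u) * \<omega> u)) = l1w_norm \<omega> a * l1w_norm \<omega> b"
    unfolding l1w_norm_def by (rule prod_infsum[OF na nb])
qed

lemma K_nonneg: 
  assumes w: "sl_weight \<omega>" and g: "\<And>t. norm (g t) \<le> K * \<omega> t" shows "0 \<le> K"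
proof -
  have "0 \<le> K * \<omega> t" for t using g[of t] norm_ge_zero order_trans by blast
  then show ?thesis using weight_pos[OF w] by (meson zero_le_mult_iff not_less)
qed

lemma conv_weighted:
  assumes w: "sl_weight \<omega>" and a: "a \<in> l1w \<omega>" and b: "b \<in> l1w \<omega>"
    and g: "\<And>t. norm (g t) \<le> K * \<omega> t"
  shows "(\<lambda>(s,u). a s * b u * g (inf s u)) summable_on UNIV"
    and "(\<lambda>t. sl_conv a b t * g t) summable_on UNIV"
    and "(\<Sum>\<^sub>\<infinity>t. sl_conv a b t * g t) = (\<Sum>\<^sub>\<infinity>(s,u). a s * b u * g (inf s u))"
proof -
  have K: "0 \<le> K" by (rule K_nonneg[OF w g])
  let ?N = "\<lambda>(s,u). (norm (a s) * \<omega> s) * (norm (b u) * \<omega> u)"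
  have N: "?N summable_on UNIV" by (rule pair_N_summable[OF w a b])
  have KN: "(\<lambda>p. K * ?N p) summable_on UNIV" by (rule summable_on_cmult_right[OF N])
  have hb: "norm (a s * b u * g (inf s u)) \<le> K * ?N (s,u)" for s u
  proof -
    have "norm (a s * b u * g (inf s u)) = norm (a s) * norm (b u) * norm (g (inf s u))"
      by (simp add: norm_mult)
    also have "\<dots> \<le> norm (a s) * norm (b u) * (K * (\<omega> s * \<omega> u))"
      using order_trans[OF g mult_left_mono[OF weight_inf[OF w] K]]
      by (intro mult_left_mono) auto
    also have "\<dots> = K * ?N (s,u)" by (simp add: algebra_simps)
    finally show ?thesis .
  qed
  have hn: "(\<lambda>p. norm ((\<lambda>(s,u). a s * b u * g (inf s u)) p)) summable_on UNIV"
    by (rule Infinite_Sum.abs_summable_on_comparison_test'[OF KN]) (use hb in auto)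
  then show hs: "(\<lambda>(s,u). a s * b u * g (inf s u)) summable_on UNIV"
    using abs_summable_summable by blast
  have pn: "(\<lambda>p. norm ((\<lambda>(s,u). a s * b u) p)) summable_on UNIV"
  proof (rule Infinite_Sum.abs_summable_on_comparison_test'[OF N])
    fix p :: "'a \<times> 'a" obtain s u where p: "p = (s,u)" by fastforce
    have "norm (a s) * norm (b u) \<le> (norm (a s) * \<omega> s) * (norm (b u) * \<omega> u)"
      using weight_ge1[OF w, of s] weight_ge1[OF w, of u]
      by (intro mult_mono) (auto simp: mult_le_cancel_left1)
    then show "norm ((\<lambda>(s,u). a s * b u) p) \<le> ?N p" by (simp add: p norm_mult)
  qed
  then have ps: "(\<lambda>(s,u). a s * b u) summable_on UNIV" using abs_summable_summable by blast
  have fib: "(\<Sum>\<^sub>\<infinity>p\<in>{(s,u). inf s u = t}. (\<lambda>(s,u). a s * b u * g (inf s u)) p) = sl_conv a b t * g t" for t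
  proof -
    have "(\<Sum>\<^sub>\<infinity>p\<in>{(s,u). inf s u = t}. (\<lambda>(s,u). a s * b u * g (inf s u)) p)
        = (\<Sum>\<^sub>\<infinity>p\<in>{(s,u). inf s u = t}. (\<lambda>(s,u). a s * b u) p * g t)"
      by (rule infsum_cong) auto
    also have "\<dots> = (\<Sum>\<^sub>\<infinity>p\<in>{(s,u). inf s u = t}. (\<lambda>(s,u). a s * b u) p) * g t"
      by (rule infsum_cmult_left) (rule summable_on_subset_banach[OF ps], auto)
    finally show ?thesis unfolding sl_conv_def by simp
  qed
  show "(\<lambda>t. sl_conv a b t * g t) summable_on UNIV"
    using regroup(1)[OF hs] fib by simp
  show "(\<Sum>\<^sub>\<infinity>t. sl_conv a b t * g t) = (\<Sum>\<^sub>\<infinity>(s,u). a s * b u * g (inf s u))"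
    using regroup(2)[OF hs] fib by simp
qed


lemma pair_abs:
  assumes w: "sl_weight \<omega>" and a: "a \<in> l1w \<omega>" and b: "b \<in> l1w \<omega>"
  shows "(\<lambda>(s,u). norm (a s * b u)) summable_on UNIV"
proof -
  let ?N = "\<lambda>(s,u). (norm (a s) * \<omega> s) * (norm (b u) * \<omega> u)"
  have "(\<lambda>p. norm ((\<lambda>(s,u). a s * b u) p)) summable_on UNIV"
  proof (rule Infinite_Sum.abs_summable_on_comparison_test'[OF pair_N_summable(1)[OF w a b]])
    fix p :: "'a \<times> 'a" obtain s u where p: "p = (s,u)" by fastforce
    have "norm (a s) * norm (b u) \<le> (norm (a s) * \<omega> s) * (norm (b u) * \<omega> u)"
      using weight_ge1[OF w, of s] weight_ge1[OF w, of u]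
      by (intro mult_mono) (auto simp: mult_le_cancel_left1)
    then show "norm ((\<lambda>(s,u). a s * b u) p) \<le> ?N p" by (simp add: p norm_mult)
  qed
  then show ?thesis by (simp add: case_prod_unfold)
qed

lemma conv_l1w:
  assumes w: "sl_weight \<omega>" and a: "a \<in> l1w \<omega>" and b: "b \<in> l1w \<omega>"
  shows "sl_conv a b \<in> l1w \<omega>" and "l1w_norm \<omega> (sl_conv a b) \<le> l1w_norm \<omega> a * l1w_norm \<omega> b"
proof -
  let ?N = "\<lambda>(s,u). (norm (a s) * \<omega> s) * (norm (b u) * \<omega> u)"
  let ?Q = "\<lambda>t. \<Sum>\<^sub>\<infinity>p\<in>{(s,u). inf s u = t}. ?N p"
  have N: "?N summable_on UNIV" by (rule pair_N_summable[OF w a b])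
  have Q: "?Q summable_on UNIV" by (rule regroup(1)[OF N])
  have SQ: "(\<Sum>\<^sub>\<infinity>t. ?Q t) = l1w_norm \<omega> a * l1w_norm \<omega> b"
    using regroup(2)[OF N] pair_N_summable(2)[OF w a b] by simp
  have PA: "(\<lambda>(s,u). norm (a s * b u)) summable_on UNIV" by (rule pair_abs[OF w a b])
  have PA': "(\<lambda>p. norm ((\<lambda>(s,u). a s * b u) p)) summable_on UNIV" using PA by (simp add: case_prod_unfold)
  have bd: "norm (sl_conv a b t) * \<omega> t \<le> ?Q t" for t
  proof -
    let ?F = "{(s,u). inf s u = t}"
    have PAF: "(\<lambda>p. norm ((\<lambda>(s,u). a s * b u) p)) summable_on ?F"
      by (rule summable_on_subset_banach[OF PA']) auto
    have NF: "?N summable_on ?F" by (rule summable_on_subset_banach[OF N]) auto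
    have "norm (sl_conv a b t) \<le> (\<Sum>\<^sub>\<infinity>p\<in>?F. norm ((\<lambda>(s,u). a s * b u) p))"
      unfolding sl_conv_def by (rule norm_infsum_bound[OF PAF])
    then have "norm (sl_conv a b t) * \<omega> t \<le> (\<Sum>\<^sub>\<infinity>p\<in>?F. norm ((\<lambda>(s,u). a s * b u) p)) * \<omega> t"
      using weight_pos[OF w, of t] by (simp add: mult_right_mono)
    also have "\<dots> = (\<Sum>\<^sub>\<infinity>p\<in>?F. norm ((\<lambda>(s,u). a s * b u) p) * \<omega> t)"
      by (rule infsum_cmult_left[symmetric, OF PAF])
    also have "\<dots> \<le> (\<Sum>\<^sub>\<infinity>p\<in>?F. ?N p)"
    proof (rule infsum_mono)
      show "(\<lambda>p. norm ((\<lambda>(s,u). a s * b u) p) * \<omega> t) summable_on ?F"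
        by (rule summable_on_cmult_left[OF PAF])
      show "?N summable_on ?F" by (rule NF)
      fix p assume "p \<in> ?F"
      then obtain s u where p: "p = (s,u)" and t: "t = inf s u" by auto
      have "norm (a s) * norm (b u) * \<omega> (inf s u) \<le> norm (a s) * norm (b u) * (\<omega> s * \<omega> u)"
        by (rule mult_left_mono[OF weight_inf[OF w]]) simp
      then show "norm ((\<lambda>(s,u). a s * b u) p) * \<omega> t \<le> ?N p"
        by (simp add: p t norm_mult algebra_simps)
    qed
    finally show ?thesis .
  qed
  have cs: "(\<lambda>t. norm (sl_conv a b t) * \<omega> t) summable_on UNIV"
    by (rule summable_on_comparison_test[OF Q]) (use bd weight_pos[OF w] in \<open>auto simp: less_imp_le\<close>)
  then show "sl_conv a b \<in> l1w \<omega>" unfolding l1w_def by simp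
  have "l1w_norm \<omega> (sl_conv a b) \<le> (\<Sum>\<^sub>\<infinity>t. ?Q t)"
    unfolding l1w_norm_def by (rule infsum_mono[OF cs Q bd])
  then show "l1w_norm \<omega> (sl_conv a b) \<le> l1w_norm \<omega> a * l1w_norm \<omega> b" using SQ by simp
qed


definition lam :: "('a \<Rightarrow> complex) \<Rightarrow> ('a \<Rightarrow> complex) \<Rightarrow> complex" where
  "lam g = (\<lambda>a. \<Sum>\<^sub>\<infinity>s. a s * g s)"

lemma lam_abs:
  assumes w: "sl_weight \<omega>" and a: "a \<in> l1w \<omega>" and g: "\<And>t. norm (g t) \<le> K * \<omega> t"
  shows "(\<lambda>s. norm (a s * g s)) summable_on UNIV"
proof (rule Infinite_Sum.abs_summable_on_comparison_test'[OF summable_on_cmult_right[OF l1wD[OF a], of K]])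
  fix s
  have "norm (a s) * norm (g s) \<le> norm (a s) * (K * \<omega> s)" by (rule mult_left_mono[OF g]) simp
  then show "norm (a s * g s) \<le> K * (norm (a s) * \<omega> s)" by (simp add: norm_mult algebra_simps)
qed

lemma lam_summable:
  assumes w: "sl_weight \<omega>" and a: "a \<in> l1w \<omega>" and g: "\<And>t. norm (g t) \<le> K * \<omega> t"
  shows "(\<lambda>s. a s * g s) summable_on UNIV"
  by (rule Infinite_Sum.abs_summable_summable[OF lam_abs[OF w a g]])

lemma lam_bound:
  assumes w: "sl_weight \<omega>" and a: "a \<in> l1w \<omega>" and g: "\<And>t. norm (g t) \<le> K * \<omega> t"
  shows "norm (lam g a) \<le> K * l1w_norm \<omega> a"
proof -
  have "norm (lam g a) \<le> (\<Sum>\<^sub>\<infinity>s. norm (a s * g s))"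
    unfolding lam_def by (rule norm_infsum_bound[OF lam_abs[OF w a g]])
  also have "\<dots> \<le> (\<Sum>\<^sub>\<infinity>s. K * (norm (a s) * \<omega> s))"
  proof (rule infsum_mono[OF lam_abs[OF w a g] summable_on_cmult_right[OF l1wD[OF a]]])
    fix s
    have "norm (a s) * norm (g s) \<le> norm (a s) * (K * \<omega> s)" by (rule mult_left_mono[OF g]) simp
    then show "norm (a s * g s) \<le> K * (norm (a s) * \<omega> s)" by (simp add: norm_mult algebra_simps)
  qed
  also have "\<dots> = K * l1w_norm \<omega> a" unfolding l1w_norm_def by (rule infsum_cmult_right') 
  finally show ?thesis .
qed

lemma l1w_add: 
  assumes "a \<in> l1w \<omega>" "b \<in> l1w \<omega>" "sl_weight \<omega>" shows "(\<lambda>s. a s + b s) \<in> l1w \<omega>"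
proof -
  have "(\<lambda>s. norm (a s) * \<omega> s + norm (b s) * \<omega> s) summable_on UNIV"
    by (rule summable_on_add[OF l1wD[OF assms(1)] l1wD[OF assms(2)]])
  then show ?thesis unfolding l1w_def mem_Collect_eq
    by (rule summable_on_comparison_test)
       (use weight_pos[OF assms(3)] in \<open>auto simp: norm_triangle_ineq distrib_right[symmetric] less_imp_le intro!: mult_right_mono\<close>)
qed

lemma l1w_scale: 
  assumes "a \<in> l1w \<omega>" shows "(\<lambda>s. c * a s) \<in> l1w \<omega>"
  using summable_on_cmult_right[OF l1wD[OF assms], of "norm c"] unfolding l1w_def
  by (simp add: norm_mult mult.assoc)

lemma lam_dual:
  assumes w: "sl_weight \<omega>" and g: "\<And>t. norm (g t) \<le> K * \<omega> t"
  shows "lam g \<in> l1w_dual \<omega>"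
  unfolding l1w_dual_def
proof (intro CollectI conjI ballI allI exI)
  fix a b assume a: "a \<in> l1w \<omega>" and b: "b \<in> l1w \<omega>"
  show "lam g (\<lambda>s. a s + b s) = lam g a + lam g b"
    unfolding lam_def using infsum_add[OF lam_summable[OF w a g] lam_summable[OF w b g]]
    by (simp add: distrib_right)
next
  fix c a assume a: "a \<in> l1w \<omega>"
  show "lam g (\<lambda>s. c * a s) = c * lam g a"
    unfolding lam_def using infsum_cmult_right[OF lam_summable[OF w a g], of c]
    by (simp add: mult.assoc)
next
  fix a assume a: "a \<in> l1w \<omega>"
  show "norm (lam g a) \<le> K * l1w_norm \<omega> a" by (rule lam_bound[OF w a g])
qed

lemma dlt_l1w: "(\<lambda>x. c * dlt e x) \<in> l1w \<omega>" and dlt_norm: "l1w_norm \<omega> (\<lambda>x. c * dlt e x) = norm c * \<omega> e"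
proof -
  have eq: "(\<lambda>s. norm (c * dlt e s) * \<omega> s) = (\<lambda>s. if s = e then norm c * \<omega> e else 0)"
    by (auto simp: dlt_def)
  have "(\<lambda>s. if s = e then norm c * \<omega> e else 0) summable_on UNIV"
    by (rule summable_on_cong_neutral[where S="{e}", THEN iffD1]) auto
  then show "(\<lambda>x. c * dlt e x) \<in> l1w \<omega>" unfolding l1w_def mem_Collect_eq eq .
  show "l1w_norm \<omega> (\<lambda>x. c * dlt e x) = norm c * \<omega> e"
    unfolding l1w_norm_def eq by (simp add: infsum_single_point)
qed

lemma lam_dlt: "lam g (\<lambda>x. c * dlt e x) = c * g e"
proof -
  have "(\<lambda>s. c * dlt e s * g s) = (\<lambda>s. if s = e then c * g e else 0)" by (auto simp: dlt_def)
  then show ?thesis unfolding lam_def by (simp add: infsum_single_point)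
qed

lemma conv_dlt:
  "sl_conv (\<lambda>x. c * dlt e x) (\<lambda>x. d * dlt f x) = (\<lambda>x. (c * d) * dlt (inf e f) x)"
proof
  fix t
  have "(\<lambda>p. (\<lambda>(s,u). c * dlt e s * (d * dlt f u)) p) = (\<lambda>p. if p = (e,f) then c * d else 0)"
    by (auto simp: dlt_def)
  then have "sl_conv (\<lambda>x. c * dlt e x) (\<lambda>x. d * dlt f x) t
      = (\<Sum>\<^sub>\<infinity>p\<in>{(s,u). inf s u = t}. (if p = (e,f) then c * d else 0))"
    unfolding sl_conv_def by (metis (no_types, lifting))
  also have "\<dots> = (c * d) * dlt (inf e f) t"
    by (simp add: infsum_single_point dlt_def)
  finally show "sl_conv (\<lambda>x. c * dlt e x) (\<lambda>x. d * dlt f x) t = (c * d) * dlt (inf e f) t" .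
qed


lemma lam_defect:
  assumes w: "sl_weight \<omega>" and a: "a \<in> l1w \<omega>" and b: "b \<in> l1w \<omega>"
    and g: "\<And>t. norm (g t) \<le> K * \<omega> t"
    and D: "\<And>s u. norm (g (inf s u) - g s * g u) \<le> D * (\<omega> s * \<omega> u)"
  shows "norm (lam g (sl_conv a b) - lam g a * lam g b) \<le> D * (l1w_norm \<omega> a * l1w_norm \<omega> b)"
proof -
  let ?N = "\<lambda>(s,u). (norm (a s) * \<omega> s) * (norm (b u) * \<omega> u)"
  let ?h1 = "\<lambda>(s,u). a s * b u * g (inf s u)"
  let ?h2 = "\<lambda>(s,u). (a s * g s) * (b u * g u)"
  have N: "?N summable_on UNIV" by (rule pair_N_summable[OF w a b])
  have h1s: "?h1 summable_on UNIV" by (rule conv_weighted(1)[OF w a b g])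
  have h2n: "(\<lambda>(s,u). norm ((a s * g s) * (b u * g u))) summable_on UNIV"
    by (rule prod_abs_summable[OF lam_abs[OF w a g] lam_abs[OF w b g]])
  have h2s: "?h2 summable_on UNIV"
    using Infinite_Sum.abs_summable_summable[of ?h2] h2n by (simp add: case_prod_unfold)
  have e1: "lam g (sl_conv a b) = (\<Sum>\<^sub>\<infinity>p. ?h1 p)"
    unfolding lam_def by (rule conv_weighted(3)[OF w a b g])
  have e2: "lam g a * lam g b = (\<Sum>\<^sub>\<infinity>p. ?h2 p)"
    unfolding lam_def by (rule prod_infsum[OF lam_abs[OF w a g] lam_abs[OF w b g], symmetric])
  have hb: "norm (?h1 p - ?h2 p) \<le> D * ?N p" for p
  proof -
    obtain s u where p: "p = (s,u)" by fastforce
    have "?h1 p - ?h2 p = a s * b u * (g (inf s u) - g s * g u)" by (simp add: p algebra_simps)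
    then have "norm (?h1 p - ?h2 p) = norm (a s) * norm (b u) * norm (g (inf s u) - g s * g u)"
      by (simp add: norm_mult)
    also have "\<dots> \<le> norm (a s) * norm (b u) * (D * (\<omega> s * \<omega> u))"
      by (rule mult_left_mono[OF D]) simp
    also have "\<dots> = D * ?N p" by (simp add: p algebra_simps)
    finally show ?thesis .
  qed
  have DN: "(\<lambda>p. D * ?N p) summable_on UNIV" by (rule summable_on_cmult_right[OF N])
  have hn: "(\<lambda>p. norm (?h1 p - ?h2 p)) summable_on UNIV"
    by (rule Infinite_Sum.abs_summable_on_comparison_test'[OF DN hb])
  have "lam g (sl_conv a b) - lam g a * lam g b = (\<Sum>\<^sub>\<infinity>p. ?h1 p - ?h2 p)"
    using e1 e2 infsum_diff'[OF h1s h2s] by simp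
  then have "norm (lam g (sl_conv a b) - lam g a * lam g b) \<le> (\<Sum>\<^sub>\<infinity>p. norm (?h1 p - ?h2 p))"
    using norm_infsum_bound[OF hn] by simp
  also have "\<dots> \<le> (\<Sum>\<^sub>\<infinity>p. D * ?N p)" by (rule infsum_mono[OF hn DN hb])
  also have "\<dots> = D * (l1w_norm \<omega> a * l1w_norm \<omega> b)"
    using infsum_cmult_right'[of D ?N] pair_N_summable(2)[OF w a b] by simp
  finally show ?thesis .
qed


lemma zero_l1w: "(\<lambda>s. 0) \<in> l1w \<omega>" unfolding l1w_def by simp
lemma zero_norm: "l1w_norm \<omega> (\<lambda>s. 0) = 0" unfolding l1w_norm_def by simp

lemma dual_bound:
  assumes w: "sl_weight \<omega>" and p: "\<psi> \<in> l1w_dual \<omega>"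
  obtains C where "0 \<le> C" "\<And>a. a \<in> l1w \<omega> \<Longrightarrow> norm (\<psi> a) \<le> C * l1w_norm \<omega> a"
proof -
  obtain C where C: "\<And>a. a \<in> l1w \<omega> \<Longrightarrow> norm (\<psi> a) \<le> C * l1w_norm \<omega> a"
    using p unfolding l1w_dual_def by blast
  have "norm (\<psi> a) \<le> max C 0 * l1w_norm \<omega> a" if "a \<in> l1w \<omega>" for a
    using C[OF that] mult_right_mono[OF max.cobounded1[of C 0] l1w_norm_nonneg[OF w, of a]] by linarith
  then show ?thesis using that[of "max C 0"] by auto
qed

lemma dual_add: "\<psi> \<in> l1w_dual \<omega> \<Longrightarrow> a \<in> l1w \<omega> \<Longrightarrow> b \<in> l1w \<omega> \<Longrightarrow> \<psi> (\<lambda>s. a s + b s) = \<psi> a + \<psi> b"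
  unfolding l1w_dual_def by auto
lemma dual_scale: "\<psi> \<in> l1w_dual \<omega> \<Longrightarrow> a \<in> l1w \<omega> \<Longrightarrow> \<psi> (\<lambda>s. c * a s) = c * \<psi> a"
  unfolding l1w_dual_def by auto

lemma dlt1_l1w: "dlt e \<in> l1w \<omega>" using dlt_l1w[of 1 e \<omega>] by simp

lemma finsum_dlt:
  assumes p: "\<psi> \<in> l1w_dual \<omega>" and w: "sl_weight \<omega>" and A: "finite A"
  shows "(\<lambda>x. \<Sum>s\<in>A. a s * dlt s x) \<in> l1w \<omega> \<and> \<psi> (\<lambda>x. \<Sum>s\<in>A. a s * dlt s x) = (\<Sum>s\<in>A. a s * \<psi> (dlt s))"
  using A
proof (induction A rule: finite_induct)
  case empty
  have "\<psi> (\<lambda>s. 0 * 0) = 0 * \<psi> (\<lambda>s. 0)" by (rule dual_scale[OF p zero_l1w])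
  then show ?case using zero_l1w by simp
next
  case (insert s A)
  have d: "(\<lambda>x. a s * dlt s x) \<in> l1w \<omega>" by (rule dlt_l1w)
  have eq: "(\<lambda>x. \<Sum>s\<in>insert s A. a s * dlt s x) = (\<lambda>x. a s * dlt s x + (\<Sum>s\<in>A. a s * dlt s x))"
    using insert by simp
  show ?case unfolding eq
    using l1w_add[OF d insert.IH[THEN conjunct1] w] dual_add[OF p d insert.IH[THEN conjunct1]]
      dual_scale[OF p dlt1_l1w, of "a s" s] insert
    by simp
qed

lemma dual_diff_bound:
  assumes w: "sl_weight \<omega>" and p: "\<psi> \<in> l1w_dual \<omega>" and m: "\<mu> \<in> l1w_dual \<omega>"
    and K: "\<And>e. norm (\<psi> (dlt e) - \<mu> (dlt e)) \<le> K * \<omega> e"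
    and a: "a \<in> l1w \<omega>"
  shows "norm (\<psi> a - \<mu> a) \<le> K * l1w_norm \<omega> a"
proof -
  obtain C1 where C1: "0 \<le> C1" "\<And>a. a \<in> l1w \<omega> \<Longrightarrow> norm (\<psi> a) \<le> C1 * l1w_norm \<omega> a"
    using dual_bound[OF w p] by blast
  obtain C2 where C2: "0 \<le> C2" "\<And>a. a \<in> l1w \<omega> \<Longrightarrow> norm (\<mu> a) \<le> C2 * l1w_norm \<omega> a"
    using dual_bound[OF w m] by blast
  let ?n = "\<lambda>s. norm (a s) * \<omega> s"
  have n: "?n summable_on UNIV" by (rule l1wD[OF a])
  have main: "norm (\<psi> a - \<mu> a) \<le> K * l1w_norm \<omega> a + (C1 + C2) * \<eta>" if eta: "0 < \<eta>" for \<eta>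
  proof -
    obtain A where A: "finite A" and Ad: "dist (sum ?n A) (infsum ?n UNIV) \<le> \<eta>"
      using infsum_finite_approximation[OF n eta] by blast
    define aA where "aA = (\<lambda>x. \<Sum>s\<in>A. a s * dlt s x)"
    define r where "r = (\<lambda>x. if x \<in> A then 0 else a x)"
    have aA_eq: "aA x = (if x \<in> A then a x else 0)" for x
      unfolding aA_def dlt_def using A by (simp add: if_distrib sum.If_cases[OF A] cong: if_cong) 
    have a_eq: "a = (\<lambda>x. aA x + r x)" unfolding r_def aA_eq by auto
    have fA1: "aA \<in> l1w \<omega>" "\<psi> aA = (\<Sum>s\<in>A. a s * \<psi> (dlt s))"
      using finsum_dlt[OF p w A, of a] unfolding aA_def by auto
    have fA2: "\<mu> aA = (\<Sum>s\<in>A. a s * \<mu> (dlt s))"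
      using finsum_dlt[OF m w A, of a] unfolding aA_def by auto
    have rl: "r \<in> l1w \<omega>" unfolding l1w_def mem_Collect_eq
      by (rule summable_on_comparison_test[OF n]) (use weight_pos[OF w] in \<open>auto simp: r_def less_imp_le\<close>)
    have rn_eq: "(\<lambda>x. norm (r x) * \<omega> x) = (\<lambda>x. ?n x - (if x \<in> A then ?n x else 0))"
      unfolding r_def by auto
    have nA: "(\<lambda>x. if x \<in> A then ?n x else 0) summable_on UNIV"
      by (rule summable_on_cong_neutral[where S=A, THEN iffD1]) (use A in auto)
    have "(\<Sum>\<^sub>\<infinity>x. (if x \<in> A then ?n x else 0)) = (\<Sum>\<^sub>\<infinity>x\<in>A. ?n x)"
      by (rule infsum_cong_neutral) auto
    also have "\<dots> = sum ?n A" using A by simp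
    finally have sA: "(\<Sum>\<^sub>\<infinity>x. (if x \<in> A then ?n x else 0)) = sum ?n A" .
    have rnorm: "l1w_norm \<omega> r = l1w_norm \<omega> a - sum ?n A"
      unfolding l1w_norm_def rn_eq using infsum_diff'[OF n nA] sA by simp
    have "sum ?n A \<le> infsum ?n UNIV"
      by (rule finite_sum_le_infsum[OF n A]) (use weight_pos[OF w] in \<open>auto simp: less_imp_le\<close>)
    then have rsmall: "l1w_norm \<omega> r \<le> \<eta>" using Ad rnorm unfolding l1w_norm_def dist_real_def by simp
    have "\<psi> a - \<mu> a = (\<psi> aA - \<mu> aA) + (\<psi> r - \<mu> r)"
      using dual_add[OF p fA1(1) rl] dual_add[OF m fA1(1) rl] a_eq by (metis diff_add_eq add_diff_eq add.commute add.left_commute diff_diff_eq)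
    then have "norm (\<psi> a - \<mu> a) \<le> norm (\<psi> aA - \<mu> aA) + norm (\<psi> r - \<mu> r)"
      by (metis norm_triangle_ineq)
    also have "norm (\<psi> aA - \<mu> aA) \<le> K * l1w_norm \<omega> a"
    proof -
      have "\<psi> aA - \<mu> aA = (\<Sum>s\<in>A. a s * (\<psi> (dlt s) - \<mu> (dlt s)))"
        using fA1(2) fA2 by (simp add: sum_subtractf algebra_simps)
      then have "norm (\<psi> aA - \<mu> aA) \<le> (\<Sum>s\<in>A. norm (a s) * (K * \<omega> s))"
        by (auto intro!: order_trans[OF norm_sum] sum_mono mult_left_mono K simp: norm_mult)
      also have "\<dots> = K * sum ?n A" by (simp add: sum_distrib_left algebra_simps)
      also have "\<dots> \<le> K * l1w_norm \<omega> a"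
      proof -
        have "0 \<le> K" using order_trans[OF norm_ge_zero K] weight_pos[OF w] by (meson zero_le_mult_iff not_less)
        then show ?thesis using \<open>sum ?n A \<le> infsum ?n UNIV\<close> unfolding l1w_norm_def by (rule mult_left_mono[rotated])
      qed
      finally show ?thesis .
    qed
    also have "norm (\<psi> r - \<mu> r) \<le> (C1 + C2) * \<eta>"
    proof -
      have "norm (\<psi> r - \<mu> r) \<le> norm (\<psi> r) + norm (\<mu> r)" by (rule norm_triangle_ineq4)
      also have "\<dots> \<le> C1 * l1w_norm \<omega> r + C2 * l1w_norm \<omega> r" using C1(2)[OF rl] C2(2)[OF rl] by simp
      also have "\<dots> \<le> (C1 + C2) * \<eta>" using rsmall C1(1) C2(1)
        by (simp add: distrib_right add_mono mult_left_mono)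
      finally show ?thesis .
    qed
    finally show ?thesis by simp
  qed
  show ?thesis
  proof (rule field_le_epsilon)
    fix e :: real assume e: "0 < e"
    have "0 < e / (C1 + C2 + 1)" using e C1(1) C2(1) by simp
    from main[OF this] have "norm (\<psi> a - \<mu> a) \<le> K * l1w_norm \<omega> a + (C1 + C2) * (e / (C1 + C2 + 1))" .
    also have "(C1 + C2) * (e / (C1 + C2 + 1)) \<le> e"
      using e C1(1) C2(1) by (simp add: field_simps)
    finally show "norm (\<psi> a - \<mu> a) \<le> K * l1w_norm \<omega> a + e" by simp
  qed
qed


lemma def_bdd:
  assumes w: "sl_weight \<omega>" and p: "\<psi> \<in> l1w_dual \<omega>"
  shows "bdd_above {norm (\<psi> (sl_conv a b) - \<psi> a * \<psi> b) | a b.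
      a \<in> l1w \<omega> \<and> b \<in> l1w \<omega> \<and> l1w_norm \<omega> a \<le> 1 \<and> l1w_norm \<omega> b \<le> 1}"
proof -
  obtain C where C: "0 \<le> C" "\<And>a. a \<in> l1w \<omega> \<Longrightarrow> norm (\<psi> a) \<le> C * l1w_norm \<omega> a"
    using dual_bound[OF w p] by blast
  have "norm (\<psi> (sl_conv a b) - \<psi> a * \<psi> b) \<le> C + C * C"
    if a: "a \<in> l1w \<omega>" and b: "b \<in> l1w \<omega>" and na: "l1w_norm \<omega> a \<le> 1" and nb: "l1w_norm \<omega> b \<le> 1" for a b
  proof -
    have n0: "0 \<le> l1w_norm \<omega> a" "0 \<le> l1w_norm \<omega> b" using l1w_norm_nonneg[OF w] by auto
    have cn: "l1w_norm \<omega> (sl_conv a b) \<le> 1"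
      using conv_l1w(2)[OF w a b] mult_le_one[OF na n0(2) nb] by linarith
    have c1: "norm (\<psi> (sl_conv a b)) \<le> C"
      using C(2)[OF conv_l1w(1)[OF w a b]] mult_left_mono[OF cn C(1)] by simp
    have c2: "norm (\<psi> a) \<le> C" using C(2)[OF a] mult_left_mono[OF na C(1)] by simp
    have c3: "norm (\<psi> b) \<le> C" using C(2)[OF b] mult_left_mono[OF nb C(1)] by simp
    have "norm (\<psi> (sl_conv a b) - \<psi> a * \<psi> b) \<le> norm (\<psi> (sl_conv a b)) + norm (\<psi> a) * norm (\<psi> b)"
      using norm_triangle_ineq4[of "\<psi> (sl_conv a b)" "\<psi> a * \<psi> b"] by (simp add: norm_mult)
    also have "\<dots> \<le> C + C * C" using c1 c2 c3 C(1) by (intro add_mono mult_mono) auto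
    finally show ?thesis .
  qed
  then show ?thesis by (intro bdd_aboveI[where M="C + C*C"]) auto
qed

lemma def_le:
  assumes "\<And>a b. a \<in> l1w \<omega> \<Longrightarrow> b \<in> l1w \<omega> \<Longrightarrow> l1w_norm \<omega> a \<le> 1 \<Longrightarrow> l1w_norm \<omega> b \<le> 1 \<Longrightarrow>
     norm (\<psi> (sl_conv a b) - \<psi> a * \<psi> b) \<le> \<delta>"
  shows "l1w_def \<omega> \<psi> \<le> \<delta>"
  unfolding l1w_def_def
proof (rule cSup_least)
  show "{norm (\<psi> (sl_conv a b) - \<psi> a * \<psi> b) | a b.
      a \<in> l1w \<omega> \<and> b \<in> l1w \<omega> \<and> l1w_norm \<omega> a \<le> 1 \<and> l1w_norm \<omega> b \<le> 1} \<noteq> {}"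
  proof -
    have "(\<lambda>s. 0) \<in> l1w \<omega> \<and> (\<lambda>s. 0) \<in> l1w \<omega> \<and> l1w_norm \<omega> (\<lambda>s. 0) \<le> 1 \<and> l1w_norm \<omega> (\<lambda>s. 0) \<le> 1"
      using zero_l1w[of \<omega>] zero_norm[of \<omega>] by simp
    then show ?thesis by blast
  qed
qed (use assms in auto)

lemma def_ge:
  assumes w: "sl_weight \<omega>" and p: "\<psi> \<in> l1w_dual \<omega>" and a: "a \<in> l1w \<omega>" and b: "b \<in> l1w \<omega>"
    and "l1w_norm \<omega> a \<le> 1" "l1w_norm \<omega> b \<le> 1"
  shows "norm (\<psi> (sl_conv a b) - \<psi> a * \<psi> b) \<le> l1w_def \<omega> \<psi>"
  unfolding l1w_def_def by (rule cSup_upper[OF _ def_bdd[OF w p]]) (use assms in blast)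

lemma dd_bdd:
  assumes w: "sl_weight \<omega>" and p: "\<psi> \<in> l1w_dual \<omega>" and m: "\<mu> \<in> l1w_dual \<omega>"
  shows "bdd_above {norm (\<psi> a - \<mu> a) | a. a \<in> l1w \<omega> \<and> l1w_norm \<omega> a \<le> 1}"
proof -
  obtain C1 where C1: "0 \<le> C1" "\<And>a. a \<in> l1w \<omega> \<Longrightarrow> norm (\<psi> a) \<le> C1 * l1w_norm \<omega> a"
    using dual_bound[OF w p] by blast
  obtain C2 where C2: "0 \<le> C2" "\<And>a. a \<in> l1w \<omega> \<Longrightarrow> norm (\<mu> a) \<le> C2 * l1w_norm \<omega> a"
    using dual_bound[OF w m] by blast
  have "norm (\<psi> a - \<mu> a) \<le> C1 + C2" if a: "a \<in> l1w \<omega>" "l1w_norm \<omega> a \<le> 1" for a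
  proof -
    have "norm (\<psi> a) \<le> C1" using C1(2)[OF a(1)] mult_left_mono[OF a(2) C1(1)] by simp
    moreover have "norm (\<mu> a) \<le> C2" using C2(2)[OF a(1)] mult_left_mono[OF a(2) C2(1)] by simp
    ultimately show ?thesis using norm_triangle_ineq4[of "\<psi> a" "\<mu> a"] by linarith
  qed
  then show ?thesis by (intro bdd_aboveI[where M="C1 + C2"]) auto
qed

lemma dd_le:
  assumes "\<And>a. a \<in> l1w \<omega> \<Longrightarrow> l1w_norm \<omega> a \<le> 1 \<Longrightarrow> norm (\<psi> a - \<mu> a) \<le> \<epsilon>"
  shows "l1w_dual_dist \<omega> \<psi> \<mu> \<le> \<epsilon>"
  unfolding l1w_dual_dist_def
proof (rule cSup_least)
  show "{norm (\<psi> a - \<mu> a) | a. a \<in> l1w \<omega> \<and> l1w_norm \<omega> a \<le> 1} \<noteq> {}"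
  proof -
    have "(\<lambda>s. 0) \<in> l1w \<omega> \<and> l1w_norm \<omega> (\<lambda>s. 0) \<le> 1"
      using zero_l1w[of \<omega>] zero_norm[of \<omega>] by simp
    then show ?thesis by blast
  qed
qed (use assms in auto)

lemma dd_ge:
  assumes w: "sl_weight \<omega>" and p: "\<psi> \<in> l1w_dual \<omega>" and m: "\<mu> \<in> l1w_dual \<omega>"
    and a: "a \<in> l1w \<omega>" "l1w_norm \<omega> a \<le> 1"
  shows "norm (\<psi> a - \<mu> a) \<le> l1w_dual_dist \<omega> \<psi> \<mu>"
  unfolding l1w_dual_dist_def by (rule cSup_upper[OF _ dd_bdd[OF w p m]]) (use a in blast)

lemma zero_mult: "(\<lambda>a. 0) \<in> l1w_mult \<omega>"
  unfolding l1w_mult_def l1w_dual_def by (auto intro!: exI[of _ 0])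

lemma dm_le:
  assumes w: "sl_weight \<omega>" and p: "\<psi> \<in> l1w_dual \<omega>" and m: "\<mu> \<in> l1w_mult \<omega>"
  shows "l1w_dist_mult \<omega> \<psi> \<le> l1w_dual_dist \<omega> \<psi> \<mu>"
  unfolding l1w_dist_mult_def
proof (rule cInf_lower)
  show "l1w_dual_dist \<omega> \<psi> \<mu> \<in> l1w_dual_dist \<omega> \<psi> ` l1w_mult \<omega>" using m by simp
  have "0 \<le> l1w_dual_dist \<omega> \<psi> \<mu>'" if "\<mu>' \<in> l1w_mult \<omega>" for \<mu>'
  proof -
    have md: "\<mu>' \<in> l1w_dual \<omega>" using that unfolding l1w_mult_def by simp
    have "norm (\<psi> (\<lambda>s. 0) - \<mu>' (\<lambda>s. 0)) \<le> l1w_dual_dist \<omega> \<psi> \<mu>'"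
      by (rule dd_ge[OF w p md zero_l1w]) (simp add: zero_norm)
    then show ?thesis using norm_ge_zero order_trans by blast
  qed
  then show "bdd_below (l1w_dual_dist \<omega> \<psi> ` l1w_mult \<omega>)" by (intro bdd_belowI[where m=0]) auto
qed

lemma dm_lt:
  assumes "l1w_dist_mult \<omega> \<psi> < \<epsilon>"
  obtains \<mu> where "\<mu> \<in> l1w_mult \<omega>" "l1w_dual_dist \<omega> \<psi> \<mu> < \<epsilon>"
proof -
  have "l1w_dual_dist \<omega> \<psi> ` l1w_mult \<omega> \<noteq> {}" using zero_mult by blast
  from cInf_lessD[OF this assms[unfolded l1w_dist_mult_def]] that show ?thesis by blast
qed


lemma one_dlt: "(\<lambda>x. 1 * dlt e x) = dlt e" by simp

lemma conv_dlt1: "sl_conv (dlt e) (dlt f) = dlt (inf e f)"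
  using conv_dlt[of 1 e 1 f] by simp

lemma lam_dlt1: "lam g (dlt e) = g e"
  using lam_dlt[of g 1 e] by simp

lemma ind_mult:
  assumes "F = {} \<or> sl_filter F"
  shows "(indicator F (inf s u) :: real) = indicator F s * indicator F u"
  using assms
proof
  assume "F = {}" then show ?thesis by simp
next
  assume f: "sl_filter F"
  have "inf s u \<in> F \<longleftrightarrow> s \<in> F \<and> u \<in> F"
    using f unfolding sl_filter_def by (meson inf.cobounded1 inf.cobounded2)
  then show ?thesis by (simp add: indicator_def)
qed

lemma lam_mult:
  assumes w: "sl_weight \<omega>" and g: "\<And>t. norm (g t) \<le> K * \<omega> t"
    and m: "\<And>s u. g (inf s u) = g s * g u"
  shows "lam g \<in> l1w_mult \<omega>"
  unfolding l1w_mult_def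
proof (intro CollectI conjI ballI lam_dual[OF w g])
  fix a b assume a: "a \<in> l1w \<omega>" and b: "b \<in> l1w \<omega>"
  have "norm (lam g (sl_conv a b) - lam g a * lam g b) \<le> 0 * (l1w_norm \<omega> a * l1w_norm \<omega> b)"
    by (rule lam_defect[OF w a b g]) (simp add: m)
  then show "lam g (sl_conv a b) = lam g a * lam g b" by simp
qed


lemma dir1:
  fixes \<omega> :: "'a::semilattice_inf \<Rightarrow> real"
  assumes w: "sl_weight \<omega>" and A: "l1w_AMNM \<omega>" and eps: "0 < \<epsilon>"
  shows "\<exists>\<delta>>0. \<forall>\<phi> :: 'a \<Rightarrow> real. range \<phi> \<subseteq> {0, 1} \<longrightarrow>
        (\<forall>e f. \<bar>\<phi> (inf e f) - \<phi> e * \<phi> f\<bar> / (\<omega> e * \<omega> f) \<le> \<delta>) \<longrightarrow>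
        (\<exists>F. (F = {} \<or> sl_filter F) \<and> (\<forall>e. \<bar>indicator F e - \<phi> e\<bar> / \<omega> e \<le> \<epsilon>))"
proof -
  obtain \<delta> where dp: "0 < \<delta>" and dA: "\<And>\<psi>. \<psi> \<in> l1w_dual \<omega> \<Longrightarrow> l1w_def \<omega> \<psi> \<le> \<delta> \<Longrightarrow> l1w_dist_mult \<omega> \<psi> \<le> \<epsilon>/2"
    using A eps unfolding l1w_AMNM_def by (meson half_gt_zero)
  show ?thesis
  proof (intro exI[of _ \<delta>] conjI allI impI dp)
    fix \<phi> :: "'a \<Rightarrow> real"
    assume r: "range \<phi> \<subseteq> {0, 1}"
      and H: "\<forall>e f. \<bar>\<phi> (inf e f) - \<phi> e * \<phi> f\<bar> / (\<omega> e * \<omega> f) \<le> \<delta>"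
    define g where "g = (\<lambda>s. complex_of_real (\<phi> s))"
    have phi01: "\<phi> s = 0 \<or> \<phi> s = 1" for s using r by auto
    have gb: "norm (g t) \<le> 1 * \<omega> t" for t
      using phi01[of t] weight_ge1[OF w, of t] by (auto simp: g_def)
    have D: "norm (g (inf s u) - g s * g u) \<le> \<delta> * (\<omega> s * \<omega> u)" for s u
    proof -
      have pos: "0 < \<omega> s * \<omega> u" using weight_pos[OF w] by simp
      have "\<bar>\<phi> (inf s u) - \<phi> s * \<phi> u\<bar> / (\<omega> s * \<omega> u) \<le> \<delta>" using H by blast
      then have "\<bar>\<phi> (inf s u) - \<phi> s * \<phi> u\<bar> \<le> \<delta> * (\<omega> s * \<omega> u)" using pos by (simp add: divide_le_eq)
      moreover have "norm (g (inf s u) - g s * g u) = \<bar>\<phi> (inf s u) - \<phi> s * \<phi> u\<bar>"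
        unfolding g_def by (metis norm_of_real of_real_diff of_real_mult)
      ultimately show ?thesis by simp
    qed
    have pd: "lam g \<in> l1w_dual \<omega>" by (rule lam_dual[OF w gb])
    have "l1w_def \<omega> (lam g) \<le> \<delta>"
    proof (rule def_le)
      fix a b assume a: "a \<in> l1w \<omega>" and b: "b \<in> l1w \<omega>" and na: "l1w_norm \<omega> a \<le> 1" and nb: "l1w_norm \<omega> b \<le> 1"
      have "norm (lam g (sl_conv a b) - lam g a * lam g b) \<le> \<delta> * (l1w_norm \<omega> a * l1w_norm \<omega> b)"
        by (rule lam_defect[OF w a b gb D])
      also have "\<dots> \<le> \<delta> * 1"
        using mult_le_one[OF na l1w_norm_nonneg[OF w] nb] dp by (intro mult_left_mono) auto
      finally show "norm (lam g (sl_conv a b) - lam g a * lam g b) \<le> \<delta>" by simp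
    qed
    then have "l1w_dist_mult \<omega> (lam g) < \<epsilon>" using dA[OF pd] eps by linarith
    then obtain \<mu> where mm: "\<mu> \<in> l1w_mult \<omega>" and mdist: "l1w_dual_dist \<omega> (lam g) \<mu> < \<epsilon>"
      by (rule dm_lt)
    have md: "\<mu> \<in> l1w_dual \<omega>" using mm unfolding l1w_mult_def by simp
    have mmul: "\<mu> (sl_conv a b) = \<mu> a * \<mu> b" if "a \<in> l1w \<omega>" "b \<in> l1w \<omega>" for a b
      using mm that unfolding l1w_mult_def by blast
    define m where "m e = \<mu> (dlt e)" for e
    have minf: "m (inf e f) = m e * m f" for e f
      unfolding m_def using mmul[OF dlt1_l1w dlt1_l1w, of e f] conv_dlt1[of e f] by simp
    have m01: "m e = 0 \<or> m e = 1" for e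
    proof -
      have "m e = m e * m e" using minf[of e e] by simp
      then have "m e * (m e - 1) = 0" by (simp add: algebra_simps)
      then show ?thesis by auto
    qed
    define F where "F = {e. m e = 1}"
    have FF: "F = {} \<or> sl_filter F"
    proof (cases "F = {}")
      case False
      have "sl_filter F" unfolding sl_filter_def
      proof (intro conjI ballI allI impI False)
        fix x y assume "x \<in> F" "y \<in> F" then show "inf x y \<in> F" by (simp add: F_def minf)
      next
        fix y x assume y: "y \<in> F" and le: "y \<le> x"
        have "m y = m y * m x" using minf[of y x] le by (simp add: inf_absorb1)
        then show "x \<in> F" using y by (simp add: F_def)
      qed
      then show ?thesis by simp
    qed simp
    have mF: "m e = complex_of_real (indicator F e)" for e
      using m01[of e] by (auto simp: F_def indicator_def)
    show "\<exists>F. (F = {} \<or> sl_filter F) \<and> (\<forall>e. \<bar>indicator F e - \<phi> e\<bar> / \<omega> e \<le> \<epsilon>)"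
    proof (intro exI[of _ F] conjI FF allI)
      fix e
      define c where "c = complex_of_real (1 / \<omega> e)"
      have we: "0 < \<omega> e" by (rule weight_pos[OF w])
      have al: "(\<lambda>x. c * dlt e x) \<in> l1w \<omega>" by (rule dlt_l1w)
      have an: "l1w_norm \<omega> (\<lambda>x. c * dlt e x) \<le> 1" 
        unfolding dlt_norm using we by (simp add: c_def norm_divide)
      have "norm (lam g (\<lambda>x. c * dlt e x) - \<mu> (\<lambda>x. c * dlt e x)) \<le> l1w_dual_dist \<omega> (lam g) \<mu>"
        by (rule dd_ge[OF w pd md al an])
      moreover have "lam g (\<lambda>x. c * dlt e x) - \<mu> (\<lambda>x. c * dlt e x) = c * (g e - m e)"
        using lam_dlt[of g c e] dual_scale[OF md dlt1_l1w, of c e] by (simp add: m_def algebra_simps)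
      moreover have "norm (c * (g e - m e)) = \<bar>indicator F e - \<phi> e\<bar> / \<omega> e"
      proof -
        have "g e - m e = complex_of_real (\<phi> e - indicator F e)" by (simp add: g_def mF)
        then have "c * (g e - m e) = complex_of_real ((1 / \<omega> e) * (\<phi> e - indicator F e))"
          by (simp add: c_def)
        then have "norm (c * (g e - m e)) = \<bar>(1 / \<omega> e) * (\<phi> e - indicator F e)\<bar>"
          by (metis norm_of_real)
        also have "\<dots> = (1 / \<omega> e) * \<bar>\<phi> e - indicator F e\<bar>" using we by (simp add: abs_mult)
        finally have "norm (c * (g e - m e)) = (1 / \<omega> e) * \<bar>\<phi> e - indicator F e\<bar>" .
        then show ?thesis by (simp add: abs_minus_commute)
      qed
      ultimately show "\<bar>indicator F e - \<phi> e\<bar> / \<omega> e \<le> \<epsilon>" using mdist by (metis less_imp_le order_trans)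
    qed
  qed
qed




lemma dir2:
  fixes \<omega> :: "'a::semilattice_inf \<Rightarrow> real"
  assumes w: "sl_weight \<omega>"
    and P: "\<forall>\<epsilon>>0. \<exists>\<delta>>0. \<forall>\<phi> :: 'a \<Rightarrow> real. range \<phi> \<subseteq> {0, 1} \<longrightarrow>
        (\<forall>e f. \<bar>\<phi> (inf e f) - \<phi> e * \<phi> f\<bar> / (\<omega> e * \<omega> f) \<le> \<delta>) \<longrightarrow>
        (\<exists>F. (F = {} \<or> sl_filter F) \<and> (\<forall>e. \<bar>indicator F e - \<phi> e\<bar> / \<omega> e \<le> \<epsilon>))"
    and eps: "0 < \<epsilon>"
  shows "\<exists>\<delta>>0. \<forall>\<psi>\<in>l1w_dual \<omega>. l1w_def \<omega> \<psi> \<le> \<delta> \<longrightarrow> l1w_dist_mult \<omega> \<psi> \<le> \<epsilon>"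
proof -
  have e2: "0 < \<epsilon>/2" using eps by simp
  obtain \<delta>2 where d2: "0 < \<delta>2" and Q: "\<forall>\<phi> :: 'a \<Rightarrow> real. range \<phi> \<subseteq> {0, 1} \<longrightarrow>
        (\<forall>e f. \<bar>\<phi> (inf e f) - \<phi> e * \<phi> f\<bar> / (\<omega> e * \<omega> f) \<le> \<delta>2) \<longrightarrow>
        (\<exists>F. (F = {} \<or> sl_filter F) \<and> (\<forall>e. \<bar>indicator F e - \<phi> e\<bar> / \<omega> e \<le> \<epsilon>/2))"
    using P[rule_format, OF e2] by (elim exE conjE) (rule that)
  define r where "r = min 1 (min (\<delta>2/5) (\<epsilon>/2))"
  have r0: "0 < r" and r1: "r \<le> 1" and r2: "5 * r \<le> \<delta>2" and r3: "r \<le> \<epsilon>/2"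
    using d2 eps by (auto simp: r_def)
  show ?thesis
  proof (intro exI[of _ "r * r"] conjI ballI impI)
    show "0 < r * r" using r0 by simp
    fix \<psi> assume pd: "\<psi> \<in> l1w_dual \<omega>" and dle: "l1w_def \<omega> \<psi> \<le> r * r"
    define z where "z e = \<psi> (dlt e)" for e
    have Z: "norm (z (inf e f) - z e * z f) \<le> (r * r) * (\<omega> e * \<omega> f)" for e f
    proof -
      have we: "0 < \<omega> e" and wf: "0 < \<omega> f" using weight_pos[OF w] by auto
      define ce where "ce = complex_of_real (1 / \<omega> e)"
      define cf where "cf = complex_of_real (1 / \<omega> f)"
      have al: "(\<lambda>x. ce * dlt e x) \<in> l1w \<omega>" "(\<lambda>x. cf * dlt f x) \<in> l1w \<omega>" by (rule dlt_l1w)+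
      have an: "l1w_norm \<omega> (\<lambda>x. ce * dlt e x) \<le> 1" "l1w_norm \<omega> (\<lambda>x. cf * dlt f x) \<le> 1"
        unfolding dlt_norm using we wf by (simp_all add: ce_def cf_def norm_divide)
      have "norm (\<psi> (sl_conv (\<lambda>x. ce * dlt e x) (\<lambda>x. cf * dlt f x)) - \<psi> (\<lambda>x. ce * dlt e x) * \<psi> (\<lambda>x. cf * dlt f x)) \<le> l1w_def \<omega> \<psi>"
        by (rule def_ge[OF w pd al an])
      moreover have "\<psi> (sl_conv (\<lambda>x. ce * dlt e x) (\<lambda>x. cf * dlt f x)) - \<psi> (\<lambda>x. ce * dlt e x) * \<psi> (\<lambda>x. cf * dlt f x)
          = (ce * cf) * (z (inf e f) - z e * z f)"
        unfolding conv_dlt z_def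
        using dual_scale[OF pd dlt1_l1w, of "ce * cf" "inf e f"] dual_scale[OF pd dlt1_l1w, of ce e]
          dual_scale[OF pd dlt1_l1w, of cf f]
        by (simp add: algebra_simps)
      moreover have "norm (ce * cf) = 1 / (\<omega> e * \<omega> f)"
      proof -
        have "ce * cf = complex_of_real (1 / (\<omega> e * \<omega> f))" by (simp add: ce_def cf_def)
        then have "norm (ce * cf) = \<bar>1 / (\<omega> e * \<omega> f)\<bar>" by (metis norm_of_real)
        then show ?thesis using we wf by simp
      qed
      ultimately have "(1 / (\<omega> e * \<omega> f)) * norm (z (inf e f) - z e * z f) \<le> l1w_def \<omega> \<psi>"
        by (simp add: norm_mult)
      then have "(1 / (\<omega> e * \<omega> f)) * norm (z (inf e f) - z e * z f) \<le> r * r"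
        using dle by linarith
      then show ?thesis using we wf by (simp add: field_simps)
    qed
    define \<rho> where "\<rho> e = (if norm (z e - 1) \<le> r * \<omega> e then 1 else (0::real))" for e
    have R: "norm (z e - complex_of_real (\<rho> e)) \<le> r * \<omega> e" for e
    proof (cases "norm (z e - 1) \<le> r * \<omega> e")
      case True then show ?thesis by (simp add: \<rho>_def)
    next
      case False
      have we: "0 < \<omega> e" by (rule weight_pos[OF w])
      have "norm (z e) \<le> r * \<omega> e"
      proof (rule ccontr)
        assume "\<not> norm (z e) \<le> r * \<omega> e"
        then have "r * \<omega> e < norm (z e)" by simp
        moreover have "r * \<omega> e < norm (z e - 1)" using False by simp
        moreover have "0 \<le> r * \<omega> e" using r0 we by simp
        ultimately have "(r * \<omega> e) * (r * \<omega> e) < norm (z e) * norm (z e - 1)"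
          by (intro mult_strict_mono) auto
        moreover have "norm (z e) * norm (z e - 1) = norm (z (inf e e) - z e * z e)"
          by (simp add: norm_mult[symmetric] algebra_simps norm_minus_commute)
        ultimately show False using Z[of e e] by (simp add: algebra_simps)
      qed
      then show ?thesis using False by (simp add: \<rho>_def)
    qed
    have rho01: "\<rho> e = 0 \<or> \<rho> e = 1" for e by (simp add: \<rho>_def)
    have rhon: "norm (complex_of_real (\<rho> e)) \<le> 1" for e using rho01[of e] by auto
    have zb: "norm (z e) \<le> 1 + r * \<omega> e" for e
      using norm_triangle_ineq[of "z e - complex_of_real (\<rho> e)" "complex_of_real (\<rho> e)"] R[of e] rhon[of e] by simp
    have rdef: "\<bar>\<rho> (inf e f) - \<rho> e * \<rho> f\<bar> / (\<omega> e * \<omega> f) \<le> \<delta>2" for e f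
    proof -
      have we: "1 \<le> \<omega> e" and wf: "1 \<le> \<omega> f" using weight_ge1[OF w] by auto
      let ?P = "\<lambda>e. complex_of_real (\<rho> e)"
      let ?W = "\<omega> e * \<omega> f"
      have W1: "\<omega> e \<le> ?W" "\<omega> f \<le> ?W" using we wf by (simp_all add: mult_le_cancel_left1 mult_le_cancel_right1)
      have eq: "?P (inf e f) - ?P e * ?P f = (?P (inf e f) - z (inf e f)) + (z (inf e f) - z e * z f)
          + ((z e - ?P e) * z f + ?P e * (z f - ?P f))" by (simp add: algebra_simps)
      have t1: "norm (?P (inf e f) - z (inf e f)) \<le> r * ?W"
      proof -
        have "r * \<omega> (inf e f) \<le> r * ?W" by (rule mult_left_mono[OF weight_inf[OF w]]) (use r0 in simp)
        then show ?thesis using R[of "inf e f"] by (simp add: norm_minus_commute)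
      qed
      have t2: "norm (z (inf e f) - z e * z f) \<le> r * ?W"
      proof -
        have "r * r \<le> r" using r0 r1 by (simp add: mult_le_cancel_left1)
        moreover have "0 \<le> ?W" using we wf by simp
        ultimately have "r * r * ?W \<le> r * ?W" by (rule mult_right_mono)
        then show ?thesis using Z[of e f] by linarith
      qed
      have t3: "norm ((z e - ?P e) * z f) \<le> (r * \<omega> e) * (1 + r * \<omega> f)"
        unfolding norm_mult by (rule mult_mono[OF R zb]) (use r0 we in auto)
      have t3': "(r * \<omega> e) * (1 + r * \<omega> f) \<le> 2 * r * ?W"
      proof -
        have "(r * \<omega> e) * (1 + r * \<omega> f) = r * \<omega> e + (r * r) * ?W" by (simp add: algebra_simps)
        moreover have "r * \<omega> e \<le> r * ?W" using W1 r0 by simp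
        moreover have "(r * r) * ?W \<le> r * ?W" using r1 r0 we wf
          by (intro mult_right_mono) (auto simp: mult_le_cancel_left1)
        ultimately show ?thesis by simp
      qed
      have t4: "norm (?P e * (z f - ?P f)) \<le> r * ?W"
      proof -
        have "norm (?P e * (z f - ?P f)) \<le> 1 * (r * \<omega> f)"
          unfolding norm_mult by (rule mult_mono[OF rhon R]) auto
        moreover have "r * \<omega> f \<le> r * ?W" using W1(2) r0 by simp
        ultimately show ?thesis by simp
      qed
      have "norm (?P (inf e f) - ?P e * ?P f) \<le> 5 * r * ?W"
        unfolding eq using t1 t2 t3 t3' t4
          norm_triangle_ineq[of "(?P (inf e f) - z (inf e f)) + (z (inf e f) - z e * z f)" "(z e - ?P e) * z f + ?P e * (z f - ?P f)"]
          norm_triangle_ineq[of "?P (inf e f) - z (inf e f)" "z (inf e f) - z e * z f"]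
          norm_triangle_ineq[of "(z e - ?P e) * z f" "?P e * (z f - ?P f)"]
        by linarith
      moreover have nP: "norm (?P (inf e f) - ?P e * ?P f) = \<bar>\<rho> (inf e f) - \<rho> e * \<rho> f\<bar>"
        by (metis norm_of_real of_real_diff of_real_mult)
      ultimately have "\<bar>\<rho> (inf e f) - \<rho> e * \<rho> f\<bar> \<le> \<delta>2 * ?W"
      proof -
        have "5 * r * ?W \<le> \<delta>2 * ?W" by (rule mult_right_mono[OF r2]) (use we wf in simp)
        then show ?thesis using \<open>norm (?P (inf e f) - ?P e * ?P f) \<le> 5 * r * ?W\<close>
          \<open>norm (?P (inf e f) - ?P e * ?P f) = \<bar>\<rho> (inf e f) - \<rho> e * \<rho> f\<bar>\<close> by linarith
      qed
      then show ?thesis using we wf by (simp add: divide_le_eq)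
    qed
    have rr: "range \<rho> \<subseteq> {0, 1}" using rho01 by auto
    obtain F where FF: "F = {} \<or> sl_filter F" and Fb: "\<And>e. \<bar>indicator F e - \<rho> e\<bar> / \<omega> e \<le> \<epsilon>/2"
      using Q[rule_format, OF rr] rdef by blast
    define g where "g = (\<lambda>s. complex_of_real (indicator F s))"
    have gb: "norm (g t) \<le> 1 * \<omega> t" for t
      using weight_ge1[OF w, of t] by (auto simp: g_def indicator_def)
    have gm: "g (inf s u) = g s * g u" for s u using ind_mult[OF FF, of s u] by (simp add: g_def)
    have mm: "lam g \<in> l1w_mult \<omega>" by (rule lam_mult[OF w gb gm])
    have md: "lam g \<in> l1w_dual \<omega>" by (rule lam_dual[OF w gb])
    have K: "norm (\<psi> (dlt e) - lam g (dlt e)) \<le> \<epsilon> * \<omega> e" for e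
    proof -
      have we: "0 < \<omega> e" by (rule weight_pos[OF w])
      have "\<bar>indicator F e - \<rho> e\<bar> \<le> \<epsilon>/2 * \<omega> e" using Fb[of e] we by (simp add: divide_le_eq)
      then have "norm (complex_of_real (\<rho> e) - g e) \<le> \<epsilon>/2 * \<omega> e"
        unfolding g_def by (metis norm_of_real of_real_diff abs_minus_commute)
      moreover have "norm (z e - g e) \<le> norm (z e - complex_of_real (\<rho> e)) + norm (complex_of_real (\<rho> e) - g e)"
        using norm_triangle_ineq[of "z e - complex_of_real (\<rho> e)" "complex_of_real (\<rho> e) - g e"] by simp
      moreover have "r * \<omega> e \<le> \<epsilon>/2 * \<omega> e" using r3 we by simp
      ultimately show ?thesis using R[of e] unfolding lam_dlt1 z_def by simp
    qed
    have "l1w_dual_dist \<omega> \<psi> (lam g) \<le> \<epsilon>"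
    proof (rule dd_le)
      fix a assume a: "a \<in> l1w \<omega>" and na: "l1w_norm \<omega> a \<le> 1"
      have "norm (\<psi> a - lam g a) \<le> \<epsilon> * l1w_norm \<omega> a" by (rule dual_diff_bound[OF w pd md K a])
      also have "\<dots> \<le> \<epsilon>" using na eps by (simp add: mult_le_cancel_left1)
      finally show "norm (\<psi> a - lam g a) \<le> \<epsilon>" .
    qed
    then show "l1w_dist_mult \<omega> \<psi> \<le> \<epsilon>" using dm_le[OF w pd mm] by simp
  qed
qed

theorem corollaryc:
  fixes \<omega> :: "'a::semilattice_inf \<Rightarrow> real"
  assumes "sl_weight \<omega>"
  shows "l1w_AMNM \<omega> \<longleftrightarrow>
    (\<forall>\<epsilon>>0. \<exists>\<delta>>0. \<forall>\<phi> :: 'a \<Rightarrow> real. range \<phi> \<subseteq> {0, 1} \<longrightarrow>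
        (\<forall>e f. \<bar>\<phi> (inf e f) - \<phi> e * \<phi> f\<bar> / (\<omega> e * \<omega> f) \<le> \<delta>) \<longrightarrow>
        (\<exists>F. (F = {} \<or> sl_filter F) \<and> (\<forall>e. \<bar>indicator F e - \<phi> e\<bar> / \<omega> e \<le> \<epsilon>)))"
proof
  assume "l1w_AMNM \<omega>" then show "\<forall>\<epsilon>>0. \<exists>\<delta>>0. \<forall>\<phi> :: 'a \<Rightarrow> real. range \<phi> \<subseteq> {0, 1} \<longrightarrow>
        (\<forall>e f. \<bar>\<phi> (inf e f) - \<phi> e * \<phi> f\<bar> / (\<omega> e * \<omega> f) \<le> \<delta>) \<longrightarrow>
        (\<exists>F. (F = {} \<or> sl_filter F) \<and> (\<forall>e. \<bar>indicator F e - \<phi> e\<bar> / \<omega> e \<le> \<epsilon>))"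
    using dir1[OF assms] by blast
next
  assume "\<forall>\<epsilon>>0. \<exists>\<delta>>0. \<forall>\<phi> :: 'a \<Rightarrow> real. range \<phi> \<subseteq> {0, 1} \<longrightarrow>
        (\<forall>e f. \<bar>\<phi> (inf e f) - \<phi> e * \<phi> f\<bar> / (\<omega> e * \<omega> f) \<le> \<delta>) \<longrightarrow>
        (\<exists>F. (F = {} \<or> sl_filter F) \<and> (\<forall>e. \<bar>indicator F e - \<phi> e\<bar> / \<omega> e \<le> \<epsilon>))"
  then show "l1w_AMNM \<omega>" unfolding l1w_AMNM_def using dir2[OF assms] by blast
qed

end
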